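(* Let $r$ be an $\mathfrak s$-matrix on a pre-Lie algebra $(\mathfrak g,\cdot_{\mathfrak g})$. Then for every $k\ge0$ and $\varphi\in\wedge^k\mathfrak g\otimes\mathfrak g=C^{k+1}_{\mathfrak s}(\mathfrak g)$ we have $\Psi(\delta_{\mathfrak s}\varphi)=\delta_{\mathrm{RB}}(\Psi\varphi)$. Consequently $\Psi$ is an isomorphism of cochain complexes from $(C^{*+1}_{\mathfrak s}(\mathfrak g),\delta_{\mathfrak s})$ to $(\mathcal C^*(\mathfrak g^*,\mathfrak g),\delta_{\mathrm{RB}})$ and induces isomorphisms of the corresponding cohomology groups.
   Context: A pre-Lie algebra is a finite-dimensional vector space $\mathfrak g$ over a field of characteristic $0$ with product $\cdot$ satisfying $(x\cdot y)\cdot z-x\cdot(y\cdot z)=(y\cdot x)\cdot z-y\cdot(x\cdot z)$; $[x,y]_{\mathfrak g}=x\cdot y-y\cdot x$. Define $\langle L^*_x\alpha,y\rangle=-\langle\alpha,x\cdot y\rangle$, $\langle R^*_x\alpha,y\rangle=-\langle\alpha,y\cdot x\rangle$, $\mathrm{ad}^*_x=L^*_x-R^*_x$. For $r\in\mathrm{Sym}^2(\mathfrak g)$, $\langle r^\sharp(\alpha),\beta\rangle=r(\alpha,\beta)$; for $r=\sum_ia_i\otimes b_i$, $[r,r]=-\sum a_i\cdot a_j\otimes b_i\otimes b_j+\sum a_i\otimes b_i\cdot a_j\otimes b_j+\sum a_i\otimes a_j\otimes[b_i,b_j]_{\mathfrak g}$, and $r$ is an $\mathfrak s$-matrix if $[r,r]=0$.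 Set $\alpha\cdot_r\beta=\mathrm{ad}^*_{r^\sharp(\alpha)}\beta-R^*_{r^\sharp(\beta)}\alpha$, $[\alpha,\beta]_r=L^*_{r^\sharp(\alpha)}\beta-L^*_{r^\sharp(\beta)}\alpha$. $C^k_{\mathfrak s}(\mathfrak g)=\wedge^{k-1}\mathfrak g\otimes\mathfrak g$, with $\varphi$ regarded as the $k$-linear map $\varphi(\alpha_1,\dots,\alpha_k)=\langle\varphi,\alpha_1\wedge\dots\wedge\alpha_{k-1}\otimes\alpha_k\rangle$; $\delta_{\mathfrak s}:C^k_{\mathfrak s}\to C^{k+1}_{\mathfrak s}$ is $\delta_{\mathfrak s}\varphi(\alpha_1,\dots,\alpha_{k+1})=-\sum_{i=1}^k(-1)^{i+1}\varphi(\alpha_1,\dots,\widehat{\alpha_i},\dots,\alpha_k,\alpha_i\cdot_r\alpha_{k+1})+\sum_{1\le i<j\le k}(-1)^{i+j}\varphi([\alpha_i,\alpha_j]_r,\alpha_1,\dots,\widehat{\alpha_i},\dots,\widehat{\alpha_j},\dots,\alpha_{k+1})$. $\Psi:\wedge^k\mathfrak g\otimes\mathfrak g\to\mathcal C^k(\mathfrak g^*,\mathfrak g)=\mathrm{Hom}(\wedge^k\mathfrak g^*,\mathfrak g)$ is $\langle\Psi(\varphi)(\alpha_1,\dots,\alpha_k),\alpha_{k+1}\rangle=\langle\varphi,\alpha_1\wedge\dots\wedge\alpha_k\otimes\alpha_{k+1}\rangle$. For $P\in\mathcal C^k(\mathfrak g^*,\mathfrak g)$, $\delta_{\mathrm{RB}}P(\alpha_1,\dots,\alpha_{k+1})=\sum_{i=1}^{k+1}(-1)^{i+1}[r^\sharp(\alpha_i),P(\alpha_1,\dots,\widehat{\alpha_i},\dots,\alpha_{k+1})]_{\mathfrak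 g}+\sum_{i=1}^{k+1}(-1)^{i+1}r^\sharp\big(L^*_{P(\alpha_1,\dots,\widehat{\alpha_i},\dots,\alpha_{k+1})}\alpha_i\big)+\sum_{1\le i<j\le k+1}(-1)^{i+j}P([\alpha_i,\alpha_j]_r,\alpha_1,\dots,\widehat{\alpha_i},\dots,\widehat{\alpha_j},\dots,\alpha_{k+1})$. *)

theory Defs
  imports Main "HOL-Library.Function_Algebras"
begin

text \<open>The pre-Lie algebra g is a finite-dimensional vector space over a field 'k of
characteristic 0, realised in coordinates as 'n \<Rightarrow> 'k with 'n a finite index type
(a basis of g). The dual space g* is realised as 'n \<Rightarrow> 'k via the dual basis; the
duality pairing is pair alpha x = sum of alpha i * x i.\<close>

definition smul :: "'k::times \<Rightarrow> ('n \<Rightarrow> 'k) \<Rightarrow> ('n \<Rightarrow> 'k)" where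
  "smul c x = (\<lambda>i. c * x i)"

definition ebas :: "'n \<Rightarrow> 'n \<Rightarrow> 'k::zero_neq_one" where
  "ebas i = (\<lambda>j. if j = i then 1 else 0)"

definition pair :: "('n::finite \<Rightarrow> 'k::comm_ring_1) \<Rightarrow> ('n \<Rightarrow> 'k) \<Rightarrow> 'k" where
  "pair \<alpha> x = (\<Sum>i\<in>UNIV. \<alpha> i * x i)"

type_synonym ('n, 'k) prod_op = "('n \<Rightarrow> 'k) \<Rightarrow> ('n \<Rightarrow> 'k) \<Rightarrow> ('n \<Rightarrow> 'k)"

definition prelie :: "('n::finite, 'k::field) prod_op \<Rightarrow> bool" where
  "prelie m \<longleftrightarrow>
     (\<forall>x y z. m (x + y) z = m x z + m y z) \<and>
     (\<forall>x y z. m x (y + z) = m x y + m x z) \<and>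
     (\<forall>c x y. m (smul c x) y = smul c (m x y)) \<and>
     (\<forall>c x y. m x (smul c y) = smul c (m x y)) \<and>
     (\<forall>x y z. m (m x y) z - m x (m y z) = m (m y x) z - m y (m x z))"

definition brg :: "('n, 'k::ab_group_add) prod_op \<Rightarrow> ('n, 'k) prod_op" where
  "brg m x y = m x y - m y x"

definition Lstar :: "('n::finite, 'k::comm_ring_1) prod_op \<Rightarrow> ('n \<Rightarrow> 'k) \<Rightarrow> ('n \<Rightarrow> 'k) \<Rightarrow> ('n \<Rightarrow> 'k)" where
  "Lstar m x \<alpha> = (\<lambda>i. - pair \<alpha> (m x (ebas i)))"

definition Rstar :: "('n::finite, 'k::comm_ring_1) prod_op \<Rightarrow> ('n \<Rightarrow> 'k) \<Rightarrow> ('n \<Rightarrow> 'k) \<Rightarrow> ('n \<Rightarrow> 'k)" where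
  "Rstar m x \<alpha> = (\<lambda>i. - pair \<alpha> (m (ebas i) x))"

definition adstar :: "('n::finite, 'k::comm_ring_1) prod_op \<Rightarrow> ('n \<Rightarrow> 'k) \<Rightarrow> ('n \<Rightarrow> 'k) \<Rightarrow> ('n \<Rightarrow> 'k)" where
  "adstar m x \<alpha> = Lstar m x \<alpha> - Rstar m x \<alpha>"

text \<open>A 2-tensor r = sum of a_i \<otimes> b_i in g \<otimes> g, given by the list of pairs (a_i, b_i).\<close>
type_synonym ('n, 'k) tensor2 = "(('n \<Rightarrow> 'k) \<times> ('n \<Rightarrow> 'k)) list"

definition rform :: "('n::finite, 'k::comm_ring_1) tensor2 \<Rightarrow> ('n \<Rightarrow> 'k) \<Rightarrow> ('n \<Rightarrow> 'k) \<Rightarrow> 'k" where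
  "rform r \<alpha> \<beta> = sum_list (map (\<lambda>(a, b). pair \<alpha> a * pair \<beta> b) r)"

definition rsharp :: "('n::finite, 'k::comm_ring_1) tensor2 \<Rightarrow> ('n \<Rightarrow> 'k) \<Rightarrow> ('n \<Rightarrow> 'k)" where
  "rsharp r \<alpha> = sum_list (map (\<lambda>(a, b). smul (pair \<alpha> a) b) r)"

definition symmetric2 :: "('n::finite, 'k::comm_ring_1) tensor2 \<Rightarrow> bool" where
  "symmetric2 r \<longleftrightarrow> (\<forall>\<alpha> \<beta>. rform r \<alpha> \<beta> = rform r \<beta> \<alpha>)"

text \<open>[r,r] in g \<otimes> g \<otimes> g, evaluated on \<alpha> \<otimes> \<beta> \<otimes> \<gamma>.\<close>
definition rr3 :: "('n::finite, 'k::comm_ring_1) prod_op \<Rightarrow> ('n, 'k) tensor2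
     \<Rightarrow> ('n \<Rightarrow> 'k) \<Rightarrow> ('n \<Rightarrow> 'k) \<Rightarrow> ('n \<Rightarrow> 'k) \<Rightarrow> 'k" where
  "rr3 m r \<alpha> \<beta> \<gamma> =
     - sum_list (map (\<lambda>(ai, bi). sum_list (map (\<lambda>(aj, bj).
          pair \<alpha> (m ai aj) * pair \<beta> bi * pair \<gamma> bj) r)) r)
     + sum_list (map (\<lambda>(ai, bi). sum_list (map (\<lambda>(aj, bj).
          pair \<alpha> ai * pair \<beta> (m bi aj) * pair \<gamma> bj) r)) r)
     + sum_list (map (\<lambda>(ai, bi). sum_list (map (\<lambda>(aj, bj).
          pair \<alpha> ai * pair \<beta> aj * pair \<gamma> (brg m bi bj)) r)) r)"

definition s_matrix :: "('n::finite, 'k::comm_ring_1) prod_op \<Rightarrow> ('n, 'k) tensor2 \<Rightarrow> bool" where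
  "s_matrix m r \<longleftrightarrow> (\<forall>\<alpha> \<beta> \<gamma>. rr3 m r \<alpha> \<beta> \<gamma> = 0)"

definition dot_r :: "('n::finite, 'k::comm_ring_1) prod_op \<Rightarrow> ('n, 'k) tensor2
     \<Rightarrow> ('n \<Rightarrow> 'k) \<Rightarrow> ('n \<Rightarrow> 'k) \<Rightarrow> ('n \<Rightarrow> 'k)" where
  "dot_r m r \<alpha> \<beta> = adstar m (rsharp r \<alpha>) \<beta> - Rstar m (rsharp r \<beta>) \<alpha>"

definition br_r :: "('n::finite, 'k::comm_ring_1) prod_op \<Rightarrow> ('n, 'k) tensor2
     \<Rightarrow> ('n \<Rightarrow> 'k) \<Rightarrow> ('n \<Rightarrow> 'k) \<Rightarrow> ('n \<Rightarrow> 'k)" where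
  "br_r m r \<alpha> \<beta> = Lstar m (rsharp r \<alpha>) \<beta> - Lstar m (rsharp r \<beta>) \<alpha>"

definition del :: "nat \<Rightarrow> 'a list \<Rightarrow> 'a list" where
  "del i xs = take i xs @ drop (Suc i) xs"

text \<open>An element of C^p_s = wedge^(p-1) g \<otimes> g is regarded as a p-linear map on g*,
alternating in the first p-1 arguments; arguments are a list of length p, and the map is 0
on lists of other lengths. An element of C^k(g*,g) is an alternating k-linear map
g* x ... x g* \<rightarrow> g, again 0 on lists of length other than k.\<close>
definition multilin_s :: "nat \<Rightarrow> (('n \<Rightarrow> 'k) list \<Rightarrow> 'k::comm_ring_1) \<Rightarrow> bool" where
  "multilin_s p \<phi> \<longleftrightarrow> (\<forall>xs ys x y c. length xs + length ys + 1 = p \<longrightarrow>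
      \<phi> (xs @ (x + y) # ys) = \<phi> (xs @ x # ys) + \<phi> (xs @ y # ys) \<and>
      \<phi> (xs @ smul c x # ys) = c * \<phi> (xs @ x # ys))"

definition multilin_v :: "nat \<Rightarrow> (('n \<Rightarrow> 'k) list \<Rightarrow> ('n \<Rightarrow> 'k::comm_ring_1)) \<Rightarrow> bool" where
  "multilin_v p P \<longleftrightarrow> (\<forall>xs ys x y c. length xs + length ys + 1 = p \<longrightarrow>
      P (xs @ (x + y) # ys) = P (xs @ x # ys) + P (xs @ y # ys) \<and>
      P (xs @ smul c x # ys) = smul c (P (xs @ x # ys)))"

definition Cs :: "nat \<Rightarrow> (('n \<Rightarrow> 'k) list \<Rightarrow> 'k::comm_ring_1) set" where
  "Cs p = {\<phi>. multilin_s p \<phi> \<and>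
     (\<forall>as i j. length as = p \<and> i < j \<and> j < p - 1 \<and> as ! i = as ! j \<longrightarrow> \<phi> as = 0) \<and>
     (\<forall>as. length as \<noteq> p \<longrightarrow> \<phi> as = 0)}"

definition CRB :: "nat \<Rightarrow> (('n \<Rightarrow> 'k) list \<Rightarrow> ('n \<Rightarrow> 'k::comm_ring_1)) set" where
  "CRB k = {P. multilin_v k P \<and>
     (\<forall>as i j. length as = k \<and> i < j \<and> j < k \<and> as ! i = as ! j \<longrightarrow> P as = 0) \<and>
     (\<forall>as. length as \<noteq> k \<longrightarrow> P as = 0)}"

text \<open>Psi : wedge^k g \<otimes> g \<rightarrow> Hom(wedge^k g*, g), characterised by
 pair (Psi phi (a_1..a_k)) a_(k+1) = phi(a_1..a_(k+1)); in coordinates, its i-th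
 component is phi(a_1,...,a_k, e_i^*).\<close>
definition Psi :: "(('n \<Rightarrow> 'k::zero_neq_one) list \<Rightarrow> 'k) \<Rightarrow> (('n \<Rightarrow> 'k) list \<Rightarrow> ('n \<Rightarrow> 'k))" where
  "Psi \<phi> = (\<lambda>as i. \<phi> (as @ [ebas i]))"

text \<open>delta_s : C^p_s \<rightarrow> C^(p+1)_s (indices shifted to 0-based).\<close>
definition delta_s :: "('n::finite, 'k::comm_ring_1) prod_op \<Rightarrow> ('n, 'k) tensor2 \<Rightarrow> nat
    \<Rightarrow> (('n \<Rightarrow> 'k) list \<Rightarrow> 'k) \<Rightarrow> (('n \<Rightarrow> 'k) list \<Rightarrow> 'k)" where
  "delta_s m r p \<phi> = (\<lambda>as. if length as = Suc p then
      - (\<Sum>i<p. (-1) ^ i * \<phi> (del i (take p as) @ [dot_r m r (as ! i) (as ! p)]))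
      + (\<Sum>i<p. \<Sum>j\<in>{i<..<p}. (-1) ^ (i + j) * \<phi> (br_r m r (as ! i) (as ! j) # del i (del j as)))
    else 0)"

text \<open>delta_RB : C^k(g*,g) \<rightarrow> C^(k+1)(g*,g) (indices shifted to 0-based).\<close>
definition delta_RB :: "('n::finite, 'k::comm_ring_1) prod_op \<Rightarrow> ('n, 'k) tensor2 \<Rightarrow> nat
    \<Rightarrow> (('n \<Rightarrow> 'k) list \<Rightarrow> ('n \<Rightarrow> 'k)) \<Rightarrow> (('n \<Rightarrow> 'k) list \<Rightarrow> ('n \<Rightarrow> 'k))" where
  "delta_RB m r k P = (\<lambda>as. if length as = Suc k then
      (\<Sum>i\<le>k. smul ((-1) ^ i) (brg m (rsharp r (as ! i)) (P (del i as))))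
      + (\<Sum>i\<le>k. smul ((-1) ^ i) (rsharp r (Lstar m (P (del i as)) (as ! i))))
      + (\<Sum>i\<le>k. \<Sum>j\<in>{i<..k}. smul ((-1) ^ (i + j)) (P (br_r m r (as ! i) (as ! j) # del i (del j as))))
    else 0)"

text \<open>Cocycles, coboundaries and cohomology (as quotient sets) of the complex
 (C^(*+1)_s, delta_s), starting in degree p = 1, and of (C^*(g*,g), delta_RB), starting in degree 0.\<close>
definition Zs :: "('n::finite, 'k::comm_ring_1) prod_op \<Rightarrow> ('n, 'k) tensor2 \<Rightarrow> nat \<Rightarrow> (('n \<Rightarrow> 'k) list \<Rightarrow> 'k) set" where
  "Zs m r p = {\<phi> \<in> Cs p. delta_s m r p \<phi> = 0}"

definition Bs :: "('n::finite, 'k::comm_ring_1) prod_op \<Rightarrow> ('n, 'k) tensor2 \<Rightarrow> nat \<Rightarrow> (('n \<Rightarrow> 'k) list \<Rightarrow> 'k) set" where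
  "Bs m r p = (if p \<le> 1 then {0} else delta_s m r (p - 1) ` Cs (p - 1))"

definition Hs :: "('n::finite, 'k::comm_ring_1) prod_op \<Rightarrow> ('n, 'k) tensor2 \<Rightarrow> nat \<Rightarrow> (('n \<Rightarrow> 'k) list \<Rightarrow> 'k) set set" where
  "Hs m r p = Zs m r p // {(\<phi>, \<psi>). \<phi> \<in> Zs m r p \<and> \<psi> \<in> Zs m r p \<and> \<phi> - \<psi> \<in> Bs m r p}"

definition ZRB :: "('n::finite, 'k::comm_ring_1) prod_op \<Rightarrow> ('n, 'k) tensor2 \<Rightarrow> nat \<Rightarrow> (('n \<Rightarrow> 'k) list \<Rightarrow> ('n \<Rightarrow> 'k)) set" where
  "ZRB m r k = {P \<in> CRB k. delta_RB m r k P = 0}"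

definition BRB :: "('n::finite, 'k::comm_ring_1) prod_op \<Rightarrow> ('n, 'k) tensor2 \<Rightarrow> nat \<Rightarrow> (('n \<Rightarrow> 'k) list \<Rightarrow> ('n \<Rightarrow> 'k)) set" where
  "BRB m r k = (if k = 0 then {0} else delta_RB m r (k - 1) ` CRB (k - 1))"

definition HRB :: "('n::finite, 'k::comm_ring_1) prod_op \<Rightarrow> ('n, 'k) tensor2 \<Rightarrow> nat \<Rightarrow> (('n \<Rightarrow> 'k) list \<Rightarrow> ('n \<Rightarrow> 'k)) set set" where
  "HRB m r k = ZRB m r k // {(P, Q). P \<in> ZRB m r k \<and> Q \<in> ZRB m r k \<and> P - Q \<in> BRB m r k}"

end

theory Submission
  imports Defs
begin

lemma fsum_apply: "(sum f S) x = sum (\<lambda>i. f i x) S"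
  by (induction S rule: infinite_finite_induct) auto

lemma fsum_list_apply: "(sum_list xs) x = sum_list (map (\<lambda>f. f x) xs)"
  by (induction xs) auto

lemma pair_add2: "pair a (x + y) = pair a x + pair a y"
  by (simp add: pair_def algebra_simps sum.distrib)
lemma pair_add1: "pair (a + b) x = pair a x + pair b x"
  by (simp add: pair_def algebra_simps sum.distrib)
lemma pair_diff2: "pair a (x - y) = pair a x - pair a y"
  by (simp add: pair_def algebra_simps sum_subtractf)
lemma pair_diff1: "pair (a - b) x = pair a x - pair b x"
  by (simp add: pair_def algebra_simps sum_subtractf)
lemma pair_smul2: "pair a (smul c x) = c * pair a x"
  by (simp add: pair_def smul_def sum_distrib_left algebra_simps)
lemma pair_smul1: "pair (smul c a) x = c * pair a x"
  by (simp add: pair_def smul_def sum_distrib_left algebra_simps)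
lemma pair_zero2: "pair a 0 = 0"
  by (simp add: pair_def)
lemma pair_zero1: "pair 0 a = 0"
  by (simp add: pair_def)
lemma pair_sum2: "pair a (sum f S) = (\<Sum>i\<in>S. pair a (f i))"
proof (induction S rule: infinite_finite_induct)
  case (insert x F)
  have "sum f (insert x F) = f x + sum f F" by (rule sum.insert) (use insert in auto)
  then show ?case using insert by (simp only: pair_add2) simp
next
  case (infinite A)
  then show ?case by (metis sum.infinite pair_zero2)
qed (simp only: sum.empty pair_zero2)
lemma pair_ebas1: "pair (ebas t) x = x t"
proof -
  have "pair (ebas t) x = (\<Sum>i\<in>UNIV. if t = i then x i else 0)"
    unfolding pair_def ebas_def by (rule sum.cong) auto
  then show ?thesis by simp
qed

lemma smul_zero: "smul (0::'k::comm_ring_1) x = 0"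
  by (simp add: smul_def fun_eq_iff)

lemma expand_vec: "(\<gamma>::'n::finite \<Rightarrow> 'k::comm_ring_1) = (\<Sum>t\<in>UNIV. smul (\<gamma> t) (ebas t))"
proof -
  have "\<And>i. (\<Sum>t\<in>UNIV. smul (\<gamma> t) (ebas t) i) = \<gamma> i"
  proof -
    fix i
    have "(\<Sum>t\<in>UNIV. smul (\<gamma> t) (ebas t) i) = (\<Sum>t\<in>UNIV. if i = t then \<gamma> t else 0)"
      unfolding smul_def ebas_def by (rule sum.cong) auto
    then show "(\<Sum>t\<in>UNIV. smul (\<gamma> t) (ebas t) i) = \<gamma> i" by simp
  qed
  then show ?thesis by (simp add: fun_eq_iff fsum_apply)
qed

lemma lin_scalar:
  fixes f :: "('n::finite \<Rightarrow> 'k::comm_ring_1) \<Rightarrow> 'k"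
  assumes add: "\<And>x y. f (x + y) = f x + f y" and sm: "\<And>c x. f (smul c x) = c * f x"
  shows "f \<gamma> = (\<Sum>t\<in>UNIV. \<gamma> t * f (ebas t))"
proof -
  have z: "f 0 = 0" using sm[of 0 0] by (simp add: smul_zero)
  have "f (\<Sum>t\<in>S. smul (\<gamma> t) (ebas t)) = (\<Sum>t\<in>S. \<gamma> t * f (ebas t))" for S
  proof (induction S rule: infinite_finite_induct)
    case (insert x F)
    have "(\<Sum>t\<in>insert x F. smul (\<gamma> t) (ebas t)) = smul (\<gamma> x) (ebas x) + (\<Sum>t\<in>F. smul (\<gamma> t) (ebas t))"
      by (rule sum.insert) (use insert in auto)
    then show ?case using insert by (simp only: add sm) simp
  next
    case (infinite A)
    then show ?case by (metis sum.infinite z)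
  qed (simp only: sum.empty z)
  then show ?thesis using expand_vec[of \<gamma>] by metis
qed

lemma lin_vec:
  fixes f :: "('n::finite \<Rightarrow> 'k::comm_ring_1) \<Rightarrow> ('n \<Rightarrow> 'k)"
  assumes add: "\<And>x y. f (x + y) = f x + f y" and sm: "\<And>c x. f (smul c x) = smul c (f x)"
  shows "f \<gamma> = (\<Sum>t\<in>UNIV. smul (\<gamma> t) (f (ebas t)))"
proof -
  have z: "f 0 = 0" using sm[of 0 0] by (simp add: smul_zero)
  have "f (\<Sum>t\<in>S. smul (\<gamma> t) (ebas t)) = (\<Sum>t\<in>S. smul (\<gamma> t) (f (ebas t)))" for S
  proof (induction S rule: infinite_finite_induct)
    case (insert x F)
    have "(\<Sum>t\<in>insert x F. smul (\<gamma> t) (ebas t)) = smul (\<gamma> x) (ebas x) + (\<Sum>t\<in>F. smul (\<gamma> t) (ebas t))"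
      by (rule sum.insert) (use insert in auto)
    then show ?case using insert by (simp only: add sm) simp
  next
    case (infinite A)
    then show ?case by (metis sum.infinite z)
  qed (simp only: sum.empty z)
  then show ?thesis using expand_vec[of \<gamma>] by metis
qed

lemma pair_m2:
  assumes "prelie m"
  shows "pair a (m y x) = (\<Sum>t\<in>UNIV. x t * pair a (m y (ebas t)))"
proof -
  have "m y x = (\<Sum>t\<in>UNIV. smul (x t) (m y (ebas t)))"
    by (rule lin_vec) (use assms in \<open>simp_all only: prelie_def\<close>)
  then show ?thesis by (simp only: pair_sum2 pair_smul2)
qed

lemma pair_m1:
  assumes "prelie m"
  shows "pair a (m x y) = (\<Sum>t\<in>UNIV. x t * pair a (m (ebas t) y))"
proof -
  have "m x y = (\<Sum>t\<in>UNIV. smul (x t) (m (ebas t) y))"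
    by (rule lin_vec[where f="\<lambda>x. m x y"]) (use assms in \<open>simp_all only: prelie_def\<close>)
  then show ?thesis by (simp only: pair_sum2 pair_smul2)
qed

lemma pair_Lstar: "prelie m \<Longrightarrow> pair (Lstar m y \<alpha>) x = - pair \<alpha> (m y x)"
proof -
  assume a: "prelie m"
  have "pair (Lstar m y \<alpha>) x = (\<Sum>i\<in>UNIV. - (x i * pair \<alpha> (m y (ebas i))))"
    by (simp only: pair_def[of "Lstar m y \<alpha>" x]) (simp add: Lstar_def algebra_simps)
  also have "\<dots> = - pair \<alpha> (m y x)" by (simp only: pair_m2[OF a, of \<alpha> y x] sum_negf)
  finally show ?thesis .
qed

lemma pair_Rstar: "prelie m \<Longrightarrow> pair (Rstar m y \<alpha>) x = - pair \<alpha> (m x y)"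
proof -
  assume a: "prelie m"
  have "pair (Rstar m y \<alpha>) x = (\<Sum>i\<in>UNIV. - (x i * pair \<alpha> (m (ebas i) y)))"
    by (simp only: pair_def[of "Rstar m y \<alpha>" x]) (simp add: Rstar_def algebra_simps)
  also have "\<dots> = - pair \<alpha> (m x y)" by (simp only: pair_m1[OF a, of \<alpha> x y] sum_negf)
  finally show ?thesis .
qed

lemma pair_adstar: "prelie m \<Longrightarrow> pair (adstar m y \<beta>) x = - pair \<beta> (brg m y x)"
  by (simp add: adstar_def pair_diff1 pair_Lstar pair_Rstar brg_def pair_diff2)

lemma pair_rsharp: "pair \<beta> (rsharp r \<gamma>) = rform r \<gamma> \<beta>"
  unfolding rsharp_def rform_def
proof (induction r)
  case Nil
  then show ?case by (simp only: list.map sum_list.Nil pair_zero2)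
next
  case (Cons p r)
  obtain a b where p: "p = (a, b)" by (cases p)
  show ?case unfolding p list.map sum_list.Cons pair_add2 Cons.IH
    by (simp add: pair_smul2 mult.commute)
qed

lemma lemmaB:
  assumes "prelie m" "symmetric2 r"
  shows "pair (dot_r m r \<alpha> \<beta>) x = - pair \<beta> (brg m (rsharp r \<alpha>) x) - pair \<beta> (rsharp r (Lstar m x \<alpha>))"
proof -
  have "pair \<beta> (rsharp r (Lstar m x \<alpha>)) = rform r (Lstar m x \<alpha>) \<beta>" by (rule pair_rsharp)
  also have "\<dots> = rform r \<beta> (Lstar m x \<alpha>)" using assms(2) by (simp add: symmetric2_def)
  also have "\<dots> = pair (Lstar m x \<alpha>) (rsharp r \<beta>)" by (simp add: pair_rsharp)
  also have "\<dots> = - pair \<alpha> (m x (rsharp r \<beta>))" using assms(1) by (rule pair_Lstar)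
  finally have e: "pair \<beta> (rsharp r (Lstar m x \<alpha>)) = - pair \<alpha> (m x (rsharp r \<beta>))" .
  show ?thesis unfolding dot_r_def pair_diff1 e
    using assms(1) by (simp add: pair_adstar pair_Rstar)
qed

lemma lemmaA:
  assumes "\<phi> \<in> Cs (Suc k)" "length xs = k"
  shows "\<phi> (xs @ [\<gamma>]) = pair \<gamma> (Psi \<phi> xs)"
proof -
  have ml: "multilin_s (Suc k) \<phi>" using assms(1) by (simp add: Cs_def)
  have "\<phi> (xs @ [\<gamma>]) = (\<Sum>t\<in>UNIV. \<gamma> t * \<phi> (xs @ [ebas t]))"
  proof (rule lin_scalar[where f="\<lambda>g. \<phi> (xs @ [g])"])
    fix x y :: "'a \<Rightarrow> 'b" and c
    show "\<phi> (xs @ [x + y]) = \<phi> (xs @ [x]) + \<phi> (xs @ [y])"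
      using ml[unfolded multilin_s_def, rule_format, of xs "[]" x y] assms(2) by simp
    show "\<phi> (xs @ [smul c x]) = c * \<phi> (xs @ [x])"
      using ml[unfolded multilin_s_def, rule_format, of xs "[]" x y c] assms(2) by simp
  qed
  then show ?thesis by (simp add: pair_def Psi_def)
qed

lemma del_append: "j < length xs \<Longrightarrow> del j (xs @ [b]) = del j xs @ [b]"
  by (simp add: del_def)

lemma length_del: "j < length xs \<Longrightarrow> length (del j xs) = length xs - 1"
  by (simp add: del_def)

lemma nth_del_lt: "i < j \<Longrightarrow> j < length xs \<Longrightarrow> del j xs ! i = xs ! i"
  by (simp add: del_def nth_append)

lemma main_identity:
  assumes pl: "prelie m" and sy: "symmetric2 r" and ph: "\<phi> \<in> Cs (Suc k)"
    and len: "length xs = Suc k"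
  shows "delta_s m r (Suc k) \<phi> (xs @ [\<beta>]) = pair \<beta> (delta_RB m r k (Psi \<phi>) xs)"
proof -
  define P where "P = Psi \<phi>"
  define a where "a i = pair \<beta> (brg m (rsharp r (xs ! i)) (P (del i xs)))" for i
  define b where "b i = pair \<beta> (rsharp r (Lstar m (P (del i xs)) (xs ! i)))" for i
  define c where "c i j = pair \<beta> (P (br_r m r (xs ! i) (xs ! j) # del i (del j xs)))" for i j
  have A: "\<And>ys \<gamma>. length ys = k \<Longrightarrow> \<phi> (ys @ [\<gamma>]) = pair \<gamma> (P ys)"
    using lemmaA[OF ph] by (simp add: P_def)
  have t1: "\<phi> (del i (take (Suc k) (xs @ [\<beta>])) @ [dot_r m r ((xs @ [\<beta>]) ! i) ((xs @ [\<beta>]) ! Suc k)])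
      = - a i - b i" if "i < Suc k" for i
  proof -
    have "take (Suc k) (xs @ [\<beta>]) = xs" using len by simp
    moreover have "(xs @ [\<beta>]) ! i = xs ! i" using that len by (simp add: nth_append)
    moreover have "(xs @ [\<beta>]) ! Suc k = \<beta>" using len by (simp add: nth_append)
    moreover have "length (del i xs) = k" using that len by (simp add: length_del)
    ultimately show ?thesis
      by (simp add: A lemmaB[OF pl sy] a_def b_def)
  qed
  have t2: "\<phi> (br_r m r ((xs @ [\<beta>]) ! i) ((xs @ [\<beta>]) ! j) # del i (del j (xs @ [\<beta>])))
      = c i j" if "i < Suc k" "j \<in> {i<..<Suc k}" for i j
  proof -
    have "(xs @ [\<beta>]) ! i = xs ! i" "(xs @ [\<beta>]) ! j = xs ! j"
      using that len by (auto simp: nth_append)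
    moreover have "del i (del j (xs @ [\<beta>])) = del i (del j xs) @ [\<beta>]"
      using that len by (simp add: del_append length_del)
    moreover have "length (br_r m r (xs ! i) (xs ! j) # del i (del j xs)) = k"
      using that len by (simp add: length_del)
    ultimately show ?thesis using A[of "br_r m r (xs ! i) (xs ! j) # del i (del j xs)" \<beta>]
      by (simp add: c_def)
  qed
  have L: "delta_s m r (Suc k) \<phi> (xs @ [\<beta>]) =
      - (\<Sum>i<Suc k. (-1) ^ i * (- a i - b i)) + (\<Sum>i<Suc k. \<Sum>j\<in>{i<..<Suc k}. (-1) ^ (i + j) * c i j)"
    unfolding delta_s_def using len t1 t2 by simp
  have R: "pair \<beta> (delta_RB m r k (Psi \<phi>) xs) =
      (\<Sum>i\<le>k. (-1) ^ i * a i) + (\<Sum>i\<le>k. (-1) ^ i * b i) + (\<Sum>i\<le>k. \<Sum>j\<in>{i<..k}. (-1) ^ (i + j) * c i j)"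
    unfolding delta_RB_def using len
    by (simp add: pair_add2 pair_sum2 pair_smul2 a_def b_def c_def P_def)
  have e1: "{..<Suc k} = {..k}" by auto
  have e2: "\<And>i. {i<..<Suc k} = {i<..k}" by auto
  have e3: "(\<Sum>i\<le>k. (-1) ^ i * (- a i - b i)) = - (\<Sum>i\<le>k. (-1) ^ i * a i) - (\<Sum>i\<le>k. (-1) ^ i * b i)"
  proof -
    have "(\<Sum>i\<le>k. (-1) ^ i * (- a i - b i)) = (\<Sum>i\<le>k. - ((-1) ^ i * a i) - (-1) ^ i * b i)"
      by (rule sum.cong) (auto simp: algebra_simps)
    then show ?thesis by (simp only: sum_subtractf sum_negf)
  qed
  show ?thesis unfolding L R e1 e2 e3 by simp
qed

lemma part1:
  assumes pl: "prelie m" and sy: "symmetric2 r" and ph: "\<phi> \<in> Cs (Suc k)"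
  shows "Psi (delta_s m r (Suc k) \<phi>) = delta_RB m r k (Psi \<phi>)"
proof (rule ext, rule ext)
  fix as :: "('a \<Rightarrow> 'b) list" and t
  show "Psi (delta_s m r (Suc k) \<phi>) as t = delta_RB m r k (Psi \<phi>) as t"
  proof (cases "length as = Suc k")
    case True
    then show ?thesis using main_identity[OF pl sy ph True, of "ebas t"]
      by (simp add: Psi_def pair_ebas1)
  next
    case False
    then show ?thesis by (simp add: Psi_def delta_s_def delta_RB_def)
  qed
qed

lemma Psi_in_CRB:
  fixes \<phi> :: "('n::finite \<Rightarrow> 'k::comm_ring_1) list \<Rightarrow> 'k"
  assumes ph: "\<phi> \<in> Cs (Suc k)"
  shows "Psi \<phi> \<in> CRB k"
proof -
  have ml: "multilin_s (Suc k) \<phi>" and alt: "\<And>as i j. length as = Suc k \<Longrightarrow> i < j \<Longrightarrow> j < k \<Longrightarrow> as ! i = as ! j \<Longrightarrow> \<phi> as = 0"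
    and z: "\<And>as. length as \<noteq> Suc k \<Longrightarrow> \<phi> as = 0"
    using ph unfolding Cs_def by auto
  have "multilin_v k (Psi \<phi>)"
    unfolding multilin_v_def
  proof (intro allI impI conjI)
    fix xs ys :: "('n \<Rightarrow> 'k) list" and x y :: "'n \<Rightarrow> 'k" and c :: 'k
    assume l: "length xs + length ys + 1 = k"
    show "Psi \<phi> (xs @ (x + y) # ys) = Psi \<phi> (xs @ x # ys) + Psi \<phi> (xs @ y # ys)"
    proof (rule ext)
      fix i
      show "Psi \<phi> (xs @ (x + y) # ys) i = (Psi \<phi> (xs @ x # ys) + Psi \<phi> (xs @ y # ys)) i"
        using ml[unfolded multilin_s_def, rule_format, of xs "ys @ [ebas i]" x y] l
        by (simp add: Psi_def)
    qed
    show "Psi \<phi> (xs @ smul c x # ys) = smul c (Psi \<phi> (xs @ x # ys))"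
    proof (rule ext)
      fix i
      show "Psi \<phi> (xs @ smul c x # ys) i = smul c (Psi \<phi> (xs @ x # ys)) i"
        using ml[unfolded multilin_s_def, rule_format, of xs "ys @ [ebas i]" x y c] l
        by (simp add: Psi_def smul_def)
    qed
  qed
  moreover have "Psi \<phi> as = 0" if "length as = k" "i < j" "j < k" "as ! i = as ! j" for as i j
  proof (rule ext)
    fix t
    have "\<phi> (as @ [ebas t]) = 0"
      by (rule alt[of _ i j]) (use that in \<open>auto simp: nth_append\<close>)
    then show "Psi \<phi> as t = 0 t" by (simp add: Psi_def)
  qed
  moreover have "Psi \<phi> as = 0" if "length as \<noteq> k" for as
    using that z by (simp add: Psi_def fun_eq_iff)
  ultimately show ?thesis unfolding CRB_def by blast
qed

lemma Cs_last:
  assumes "\<phi> \<in> Cs (Suc k)" "length xs = k"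
  shows "\<phi> (xs @ [\<gamma>]) = pair \<gamma> (Psi \<phi> xs)"
  using lemmaA[OF assms] .

lemma eq_by_last:
  fixes f g :: "('n \<Rightarrow> 'k) list \<Rightarrow> 'k::zero"
  assumes "\<And>as. length as \<noteq> Suc n \<Longrightarrow> f as = 0" "\<And>as. length as \<noteq> Suc n \<Longrightarrow> g as = 0"
    and "\<And>xs b. length xs = n \<Longrightarrow> f (xs @ [b]) = g (xs @ [b])"
  shows "f = g"
proof (rule ext)
  fix as :: "('n \<Rightarrow> 'k) list"
  show "f as = g as"
  proof (cases "length as = Suc n")
    case True
    then obtain xs b where "as = xs @ [b]" by (metis length_Suc_conv_rev)
    then show ?thesis using True assms(3) by simp
  next
    case False
    then show ?thesis using assms(1,2) by simp
  qed
qed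

lemma Psi_inj: "inj_on Psi (Cs (Suc k) :: (('n::finite \<Rightarrow> 'k::comm_ring_1) list \<Rightarrow> 'k) set)"
proof (rule inj_onI)
  fix \<phi> \<psi> :: "('n \<Rightarrow> 'k) list \<Rightarrow> 'k" assume a: "\<phi> \<in> Cs (Suc k)" "\<psi> \<in> Cs (Suc k)" "Psi \<phi> = Psi \<psi>"
  show "\<phi> = \<psi>"
  proof (rule eq_by_last[where n=k])
    fix xs :: "('n \<Rightarrow> 'k) list" and b assume "length xs = k"
    then show "\<phi> (xs @ [b]) = \<psi> (xs @ [b])"
      using lemmaA[OF a(1)] lemmaA[OF a(2)] a(3) by simp
  qed (use a in \<open>auto simp: Cs_def\<close>)
qed

lemma Psi_surj:
  fixes P :: "('n::finite \<Rightarrow> 'k::comm_ring_1) list \<Rightarrow> ('n \<Rightarrow> 'k)"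
  assumes P: "P \<in> CRB k"
  shows "\<exists>\<phi>\<in>Cs (Suc k). Psi \<phi> = P"
proof -
  have ml: "multilin_v k P" and alt: "\<And>as i j. length as = k \<Longrightarrow> i < j \<Longrightarrow> j < k \<Longrightarrow> as ! i = as ! j \<Longrightarrow> P as = 0"
    and z: "\<And>as. length as \<noteq> k \<Longrightarrow> P as = 0"
    using P unfolding CRB_def by auto
  define \<phi> :: "('n \<Rightarrow> 'k) list \<Rightarrow> 'k" where
    "\<phi> as = (if length as = Suc k then pair (last as) (P (butlast as)) else 0)" for as
  have "multilin_s (Suc k) \<phi>"
    unfolding multilin_s_def
  proof (intro allI impI)
    fix xs ys :: "('n \<Rightarrow> 'k) list" and x y :: "'n \<Rightarrow> 'k" and c :: 'k
    assume l: "length xs + length ys + 1 = Suc k"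
    show "\<phi> (xs @ (x + y) # ys) = \<phi> (xs @ x # ys) + \<phi> (xs @ y # ys) \<and>
          \<phi> (xs @ smul c x # ys) = c * \<phi> (xs @ x # ys)"
    proof (cases ys rule: rev_cases)
      case Nil
      then show ?thesis using l by (simp add: \<phi>_def pair_add1 pair_smul1 butlast_append)
    next
      case (snoc ys' w)
      have l': "length xs + length ys' + 1 = k" using l snoc by simp
      have h1: "\<And>z. butlast (xs @ z # ys) = xs @ z # ys'" "\<And>z. last (xs @ z # ys) = w"
        using snoc by (simp_all add: butlast_append)
      show ?thesis using l
        ml[unfolded multilin_v_def, rule_format, OF l', of x y c]
        by (simp add: \<phi>_def h1 pair_add2 pair_smul2)
    qed
  qed
  moreover have "\<phi> as = 0" if "length as = Suc k" "i < j" "j < Suc k - 1" "as ! i = as ! j" for as i j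
  proof -
    have "P (butlast as) = 0"
      by (rule alt[of _ i j]) (use that in \<open>auto simp: nth_butlast\<close>)
    then show ?thesis by (simp add: \<phi>_def pair_zero2)
  qed
  moreover have "\<phi> as = 0" if "length as \<noteq> Suc k" for as
    using that by (simp add: \<phi>_def)
  ultimately have "\<phi> \<in> Cs (Suc k)" unfolding Cs_def by blast
  moreover have "Psi \<phi> = P"
  proof (rule ext, rule ext)
    fix as :: "('n \<Rightarrow> 'k) list" and t
    show "Psi \<phi> as t = P as t"
      by (cases "length as = k") (auto simp: Psi_def \<phi>_def pair_ebas1 z)
  qed
  ultimately show ?thesis by blast
qed

lemma quot_bij:
  assumes bij: "bij_betw f A B" and rel: "\<And>x y. x \<in> A \<Longrightarrow> y \<in> A \<Longrightarrow> (Pr x y \<longleftrightarrow> Q (f x) (f y))"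
  shows "bij_betw (image f) (A // {(x, y). x \<in> A \<and> y \<in> A \<and> Pr x y}) (B // {(u, v). u \<in> B \<and> v \<in> B \<and> Q u v})"
proof -
  let ?R = "{(x, y). x \<in> A \<and> y \<in> A \<and> Pr x y}"
  let ?S = "{(u, v). u \<in> B \<and> v \<in> B \<and> Q u v}"
  have inj: "inj_on f A" and img: "f ` A = B" using bij by (auto simp: bij_betw_def)
  have cls: "f ` (?R `` {x}) = ?S `` {f x}" if "x \<in> A" for x
  proof
    show "f ` (?R `` {x}) \<subseteq> ?S `` {f x}" using that rel img by auto
    show "?S `` {f x} \<subseteq> f ` (?R `` {x})"
    proof
      fix v assume "v \<in> ?S `` {f x}"
      then have v: "v \<in> B" "Q (f x) v" by auto
      then obtain y where y: "y \<in> A" "v = f y" using img by auto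
      then show "v \<in> f ` (?R `` {x})" using v that rel by auto
    qed
  qed
  have "inj_on (image f) (A // ?R)"
  proof -
    have "A // ?R \<subseteq> Pow A" unfolding quotient_def by auto
    then show ?thesis using inj_on_image_Pow[OF inj] inj_on_subset by blast
  qed
  moreover have "image f ` (A // ?R) = B // ?S"
  proof -
    have "image f ` (A // ?R) = (\<Union>x\<in>A. {?S `` {f x}})"
      unfolding quotient_def using cls by auto
    also have "\<dots> = (\<Union>u\<in>B. {?S `` {u}})" using img by auto
    finally show ?thesis unfolding quotient_def .
  qed
  ultimately show ?thesis by (simp add: bij_betw_def)
qed

lemma Psi_diff: "Psi (\<phi> - \<psi>) = Psi \<phi> - Psi \<psi>"
  by (simp add: Psi_def fun_eq_iff)

lemma Psi_zero: "Psi 0 = 0"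
  by (simp add: Psi_def fun_eq_iff)

lemma Psi_Z:
  fixes m :: "('n::finite, 'k::field) prod_op"
  assumes pl: "prelie m" and sy: "symmetric2 r"
  shows "bij_betw Psi (Zs m r (Suc k)) (ZRB m r k)"
proof -
  have sub: "Zs m r (Suc k) \<subseteq> Cs (Suc k)" by (auto simp: Zs_def)
  have "inj_on Psi (Zs m r (Suc k))" using inj_on_subset[OF Psi_inj sub] .
  moreover have "Psi ` Zs m r (Suc k) \<subseteq> ZRB m r k"
  proof
    fix P assume "P \<in> Psi ` Zs m r (Suc k)"
    then obtain \<phi> where ph: "\<phi> \<in> Cs (Suc k)" "delta_s m r (Suc k) \<phi> = 0" "P = Psi \<phi>"
      by (auto simp: Zs_def)
    then show "P \<in> ZRB m r k"
      using Psi_in_CRB[OF ph(1)] part1[OF pl sy ph(1)] by (simp add: ZRB_def Psi_zero)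
  qed
  moreover have "ZRB m r k \<subseteq> Psi ` Zs m r (Suc k)"
  proof
    fix P assume P: "P \<in> ZRB m r k"
    then obtain \<phi> where ph: "\<phi> \<in> Cs (Suc k)" "Psi \<phi> = P"
      using Psi_surj by (auto simp: ZRB_def)
    have d0: "delta_RB m r k P = 0" using P by (simp add: ZRB_def)
    have "delta_s m r (Suc k) \<phi> = 0"
    proof (rule eq_by_last[where n="Suc k"])
      fix xs :: "('n \<Rightarrow> 'k) list" and b assume l: "length xs = Suc k"
      show "delta_s m r (Suc k) \<phi> (xs @ [b]) = 0 (xs @ [b])"
        using main_identity[OF pl sy ph(1) l, of b] d0 ph(2) by (simp add: pair_zero2)
    qed (auto simp: delta_s_def)
    then show "P \<in> Psi ` Zs m r (Suc k)" using ph by (auto simp: Zs_def)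
  qed
  ultimately show ?thesis by (auto simp: bij_betw_def)
qed

lemma Psi_B:
  fixes m :: "('n::finite, 'k::field) prod_op"
  assumes pl: "prelie m" and sy: "symmetric2 r"
    and ph: "\<phi> \<in> Zs m r (Suc k)" and ps: "\<psi> \<in> Zs m r (Suc k)"
  shows "\<phi> - \<psi> \<in> Bs m r (Suc k) \<longleftrightarrow> Psi \<phi> - Psi \<psi> \<in> BRB m r k"
proof -
  have phC: "\<phi> \<in> Cs (Suc k)" and psC: "\<psi> \<in> Cs (Suc k)" using ph ps by (auto simp: Zs_def)
  show ?thesis
  proof (cases k)
    case 0
    have "\<phi> = \<psi> \<longleftrightarrow> Psi \<phi> = Psi \<psi>" using Psi_inj phC psC by (auto simp: inj_on_def)
    then show ?thesis using 0 by (simp add: Bs_def BRB_def)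
  next
    case (Suc k')
    have Bs: "Bs m r (Suc k) = delta_s m r (Suc k') ` Cs (Suc k')" using Suc by (simp add: Bs_def)
    have BR: "BRB m r k = delta_RB m r k' ` CRB k'" using Suc by (simp add: BRB_def)
    show ?thesis
    proof
      assume "\<phi> - \<psi> \<in> Bs m r (Suc k)"
      then obtain \<chi> where ch: "\<chi> \<in> Cs (Suc k')" "\<phi> - \<psi> = delta_s m r (Suc k') \<chi>"
        using Bs by auto
      have "Psi \<phi> - Psi \<psi> = delta_RB m r k' (Psi \<chi>)"
        using part1[OF pl sy ch(1)] ch(2) Psi_diff by metis
      then show "Psi \<phi> - Psi \<psi> \<in> BRB m r k" using BR Psi_in_CRB[OF ch(1)] by auto
    next
      assume "Psi \<phi> - Psi \<psi> \<in> BRB m r k"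
      then obtain Q where Q: "Q \<in> CRB k'" "Psi \<phi> - Psi \<psi> = delta_RB m r k' Q" using BR by auto
      then obtain \<chi> where ch: "\<chi> \<in> Cs (Suc k')" "Psi \<chi> = Q" using Psi_surj by blast
      have "\<phi> - \<psi> = delta_s m r (Suc k') \<chi>"
      proof (rule eq_by_last[where n="Suc k'"])
        fix xs :: "('n \<Rightarrow> 'k) list" and b assume l: "length xs = Suc k'"
        have "(\<phi> - \<psi>) (xs @ [b]) = pair b (Psi \<phi> xs) - pair b (Psi \<psi> xs)"
          using lemmaA[OF phC] lemmaA[OF psC] l Suc by simp
        also have "\<dots> = pair b ((Psi \<phi> - Psi \<psi>) xs)" by (simp add: pair_diff2)
        also have "\<dots> = delta_s m r (Suc k') \<chi> (xs @ [b])"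
          using main_identity[OF pl sy ch(1) l, of b] Q(2) ch(2) by simp
        finally show "(\<phi> - \<psi>) (xs @ [b]) = delta_s m r (Suc k') \<chi> (xs @ [b])" .
      next
        fix as :: "('n \<Rightarrow> 'k) list" assume "length as \<noteq> Suc (Suc k')"
        then show "(\<phi> - \<psi>) as = 0" using phC psC Suc by (simp add: Cs_def)
      qed (simp add: delta_s_def)
      then show "\<phi> - \<psi> \<in> Bs m r (Suc k)" using Bs ch(1) by auto
    qed
  qed
qed

theorem proposition4p4:
  fixes m :: "('n::finite, 'k::field_char_0) prod_op"
    and r :: "('n, 'k) tensor2"
  assumes "prelie m"
    and "symmetric2 r"
    and "s_matrix m r"
  shows "(\<forall>k. \<forall>\<phi> \<in> Cs (Suc k).
            Psi (delta_s m r (Suc k) \<phi>) = delta_RB m r k (Psi \<phi>))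
       \<and> (\<forall>k. bij_betw Psi (Cs (Suc k) :: (('n \<Rightarrow> 'k) list \<Rightarrow> 'k) set) (CRB k)
            \<and> (\<forall>\<phi> \<in> (Cs (Suc k) :: (('n \<Rightarrow> 'k) list \<Rightarrow> 'k) set). \<forall>\<psi> \<in> Cs (Suc k). Psi (\<phi> + \<psi>) = Psi \<phi> + Psi \<psi>)
            \<and> (\<forall>c::'k. \<forall>\<phi> \<in> (Cs (Suc k) :: (('n \<Rightarrow> 'k) list \<Rightarrow> 'k) set). Psi (\<lambda>as. c * \<phi> as) = (\<lambda>as. smul c (Psi \<phi> as))))
       \<and> (\<forall>k. bij_betw (\<lambda>X. Psi ` X) (Hs m r (Suc k)) (HRB m r k))"
proof (intro conjI allI ballI)
  fix k and \<phi> :: "('n \<Rightarrow> 'k) list \<Rightarrow> 'k"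
  assume "\<phi> \<in> Cs (Suc k)"
  then show "Psi (delta_s m r (Suc k) \<phi>) = delta_RB m r k (Psi \<phi>)"
    using part1[OF assms(1,2)] by blast
next
  fix k
  have "Psi ` (Cs (Suc k) :: (('n \<Rightarrow> 'k) list \<Rightarrow> 'k) set) = CRB k"
    using Psi_in_CRB Psi_surj by fastforce
  then show "bij_betw Psi (Cs (Suc k) :: (('n \<Rightarrow> 'k) list \<Rightarrow> 'k) set) (CRB k)"
    using Psi_inj by (simp add: bij_betw_def)
next
  fix k and \<phi> \<psi> :: "('n \<Rightarrow> 'k) list \<Rightarrow> 'k"
  show "Psi (\<phi> + \<psi>) = Psi \<phi> + Psi \<psi>" by (simp add: Psi_def fun_eq_iff)
next
  fix k c and \<phi> :: "('n \<Rightarrow> 'k) list \<Rightarrow> 'k"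
  show "Psi (\<lambda>as. c * \<phi> as) = (\<lambda>as. smul c (Psi \<phi> as))" by (simp add: Psi_def smul_def fun_eq_iff)
next
  fix k
  show "bij_betw (\<lambda>X. Psi ` X) (Hs m r (Suc k)) (HRB m r k)"
    unfolding Hs_def HRB_def
    by (rule quot_bij[OF Psi_Z[OF assms(1,2)]]) (rule Psi_B[OF assms(1,2)])
qed

end
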